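(* Let $r\ge1$, $n$ be integers and let $\sigma:\mathbb{Z}_n\to\{0,1\}$ be a temporally periodic configuration in which every maximal homogeneous block has length at most $r$. Then $\sigma$ is balanced, i.e. $|\{i:\sigma(i)=0\}|=|\{i:\sigma(i)=1\}|$.
   Context: Cells are elements of $\mathbb{Z}_n$, arithmetic mod $n$; $[a,b]$ denotes the cyclic interval $a,\dots,b$. The majority rule with radius $r$: $\mathrm{maj}_r(\sigma)(i)=0$ if among the cells of $[i-r,i+r]$ strictly more have value $0$ than $1$ under $\sigma$, and $=1$ otherwise. $\sigma$ is temporally periodic if $\mathrm{maj}_r(\mathrm{maj}_r(\sigma))=\sigma$. A maximal homogeneous block of $\sigma$ with value $\beta$ is a cell interval $[i,j]$ with $\sigma(k)=\beta$ for all $k\in[i,j]$ and $\sigma(i-1)=\sigma(j+1)=1-\beta$. *)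

theory Defs
  imports Main
begin

text \<open>Cells are the residues 0..n-1 (int); a configuration is sigma :: int => nat with
  values in {0,1} on {0..<n}; cell k is accessed as sigma (k mod n).\<close>

text \<open>Number of cells (counted with multiplicity, i.e. over offsets d in [-r,r]) of the
  window [i-r,i+r] with value b.\<close>
definition win_count :: "int \<Rightarrow> int \<Rightarrow> (int \<Rightarrow> nat) \<Rightarrow> int \<Rightarrow> nat \<Rightarrow> nat" where
  "win_count n r \<sigma> i b = card {d \<in> {-r..r}. \<sigma> ((i + d) mod n) = b}"

definition maj :: "int \<Rightarrow> int \<Rightarrow> (int \<Rightarrow> nat) \<Rightarrow> (int \<Rightarrow> nat)" where
  "maj n r \<sigma> = (\<lambda>i. if win_count n r \<sigma> i 0 > win_count n r \<sigma> i 1 then 0 else 1)"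

definition temporally_periodic :: "int \<Rightarrow> int \<Rightarrow> (int \<Rightarrow> nat) \<Rightarrow> bool" where
  "temporally_periodic n r \<sigma> \<longleftrightarrow> (\<forall>i\<in>{0..<n}. maj n r (maj n r \<sigma>) i = \<sigma> i)"

definition max_block :: "int \<Rightarrow> (int \<Rightarrow> nat) \<Rightarrow> int \<Rightarrow> int \<Rightarrow> nat \<Rightarrow> bool" where
  "max_block n \<sigma> s L \<beta> \<longleftrightarrow> s \<in> {0..<n} \<and> 1 \<le> L \<and> L \<le> n \<and>
     (\<forall>k\<in>{0..<L}. \<sigma> ((s + k) mod n) = \<beta>) \<and>
     \<sigma> ((s - 1) mod n) = 1 - \<beta> \<and> \<sigma> ((s + L) mod n) = 1 - \<beta>"

definition in_block :: "int \<Rightarrow> int \<Rightarrow> int \<Rightarrow> int \<Rightarrow> bool" where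
  "in_block n s L i \<longleftrightarrow> (\<exists>k\<in>{0..<L}. (s + k) mod n = i)"

end

theory Submission
  imports Defs
begin

lemma sum_split_int:
  assumes "a \<le> m" "m \<le> b"
  shows "sum g {a..<b} = sum g {a..<m} + sum g {m..<(b::int)}"
proof -
  have "{a..<b} = {a..<m} \<union> {m..<b}" using assms by auto
  then show ?thesis by (simp add: sum.union_disjoint)
qed

definition psum :: "(int \<Rightarrow> int) \<Rightarrow> int \<Rightarrow> int" where
  "psum w t = sum w {0..<t} - sum w {t..<0}"

lemma psum_diff:
  assumes "a \<le> b"
  shows "psum w b - psum w a = sum w {a..<b}"
proof (cases "0 \<le> a")
  case True
  then show ?thesis using assms sum_split_int[of 0 a b w] by (simp add: psum_def)
next
  case False
  show ?thesis
  proof (cases "0 \<le> b")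
    case True
    then show ?thesis using False sum_split_int[of a 0 b w] by (simp add: psum_def)
  next
    case False2: False
    then show ?thesis using False assms sum_split_int[of a b 0 w] by (simp add: psum_def)
  qed
qed

lemma psum_step: "psum w (t+1) = psum w t + w t"
proof -
  have "{t..<t+1} = {t}" by auto
  then show ?thesis using psum_diff[of t "t+1" w] by simp
qed

lemma chg:
  fixes w :: "int \<Rightarrow> 'a"
  assumes "p < q" "w p \<noteq> w q"
  shows "\<exists>j. p < j \<and> j \<le> q \<and> w (j-1) \<noteq> w j"
proof (rule ccontr)
  assume H: "\<not> ?thesis"
  have "\<forall>m::nat. p + int m \<le> q \<longrightarrow> w (p + int m) = w p"
  proof
    fix m :: nat
    show "p + int m \<le> q \<longrightarrow> w (p + int m) = w p"
    proof (induction m)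
      case 0 then show ?case by simp
    next
      case (Suc m)
      show ?case
      proof
        assume "p + int (Suc m) \<le> q"
        then have "w (p + int (Suc m) - 1) = w (p + int (Suc m))" using H by auto
        moreover have "p + int (Suc m) - 1 = p + int m" by simp
        ultimately show "w (p + int (Suc m)) = w p" using Suc \<open>p + int (Suc m) \<le> q\<close> by simp
      qed
    qed
  qed
  from this[rule_format, of "nat (q - p)"] assms show False by simp
qed

lemma const_nochg:
  fixes w :: "int \<Rightarrow> 'a"
  assumes "\<And>j. p < j \<Longrightarrow> j \<le> q \<Longrightarrow> w (j-1) = w j" "p \<le> k" "k \<le> q"
  shows "w k = w p"
proof (rule ccontr)
  assume "w k \<noteq> w p"
  then have "p < k" using assms by (cases "p = k") auto
  from chg[of p k w] this \<open>w k \<noteq> w p\<close> obtain j where "p < j" "j \<le> k" "w (j-1) \<noteq> w j" by metis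
  then show False using assms by force
qed

lemma sum_const_int:
  assumes "\<And>k. a \<le> k \<Longrightarrow> k < b \<Longrightarrow> w k = c" "a \<le> b"
  shows "sum w {a..<b} = c * (b - (a::int))"
proof -
  have "sum w {a..<b} = sum (\<lambda>_. c) {a..<b}" using assms by (intro sum.cong) auto
  also have "\<dots> = c * (b - a)" using assms by simp
  finally show ?thesis .
qed

lemma per_sum:
  fixes w :: "int \<Rightarrow> int"
  assumes "\<And>i. w (i + n) = w i" "n \<ge> 0"
  shows "sum w {a..<a+n} = sum w {0..<n}"
proof -
  have step: "sum w {b+1..<b+1+n} = sum w {b..<b+n}" for b
  proof -
    have "sum w {b+1..<b+1+n} = psum w (b+1+n) - psum w (b+1)" using psum_diff assms by simp
    also have "\<dots> = psum w (b+n) + w (b+n) - psum w b - w b"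
      using psum_step[of w "b+n"] psum_step[of w b] by (simp add: algebra_simps)
    also have "\<dots> = psum w (b+n) - psum w b" using assms by simp
    also have "\<dots> = sum w {b..<b+n}" using psum_diff assms by simp
    finally show ?thesis .
  qed
  show ?thesis
  proof (induction a rule: int_induct[where k=0])
    case base then show ?case by simp
  next
    case (step1 i) then show ?case using step[of i] by simp
  next
    case (step2 i) then show ?case using step[of "i-1"] by simp
  qed
qed

lemma psum_per:
  fixes w :: "int \<Rightarrow> int"
  assumes "\<And>i. w (i + n) = w i" "n \<ge> 0"
  shows "psum w (t + k*n) = psum w t + k * psum w n"
proof -
  have pn: "psum w n = sum w {0..<n}" using assms by (simp add: psum_def)
  have st: "psum w (b + n) = psum w b + psum w n" for b
    using psum_diff[of b "b+n" w] per_sum[where w=w and n=n, OF assms, of b] pn assms by simp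
  show ?thesis
  proof (induction k rule: int_induct[where k=0])
    case base then show ?case by simp
  next
    case (step1 i)
    have "t + (i+1)*n = (t + i*n) + n" by (simp add: algebra_simps)
    then show ?case using st[of "t + i*n"] step1 by (simp add: algebra_simps)
  next
    case (step2 i)
    have "t + i*n = (t + (i-1)*n) + n" by (simp add: algebra_simps)
    then show ?case using st[of "t + (i-1)*n"] step2 by (simp add: algebra_simps)
  qed
qed

lemma psum_mod:
  fixes w :: "int \<Rightarrow> int"
  assumes "\<And>i. w (i + n) = w i" "n \<ge> 0"
  shows "psum w a = psum w (a mod n) + (a div n) * psum w n"
  using psum_per[where w=w and n=n, OF assms, of "a mod n" "a div n"] by simp

locale pmf =
  fixes n r :: int and w :: "int \<Rightarrow> int"
  assumes n_pos: "n \<ge> 1" and r_pos: "r \<ge> 1"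
    and w_per: "\<And>i k. w (i + k*n) = w i"
    and w_pm: "\<And>i. w i = 1 \<or> w i = -1"
    and w_run: "\<And>i. \<exists>k\<in>{1..r}. w (i+k) \<noteq> w i"
begin

definition bd :: "int \<Rightarrow> bool" where "bd i \<longleftrightarrow> w (i-1) \<noteq> w i"

lemma w_per1: "w (i + n) = w i"
  using w_per[of i 1] by simp

lemma bd_per: "bd (i + k*n) = bd i"
proof -
  have "w (i + k*n - 1) = w (i - 1)" using w_per[of "i-1" k] by (simp add: algebra_simps)
  then show ?thesis unfolding bd_def using w_per[of i k] by simp
qed

lemma exists_bd: "\<exists>j. i < j \<and> j \<le> i + r \<and> bd j"
proof -
  obtain k where k: "k \<in> {1..r}" "w (i+k) \<noteq> w i" using w_run by blast
  from chg[of i "i+k" w] k obtain j where "i < j" "j \<le> i + k" "w (j-1) \<noteq> w j" by force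
  then show ?thesis using k unfolding bd_def by (intro exI[of _ j]) auto
qed

definition nxt :: "int \<Rightarrow> int" where
  "nxt i = i + int (LEAST m::nat. 0 < m \<and> bd (i + int m))"

lemma nxt_props: "i < nxt i \<and> nxt i \<le> i + r \<and> bd (nxt i) \<and> (\<forall>j. i < j \<and> j < nxt i \<longrightarrow> \<not> bd j)"
proof -
  obtain j where j: "i < j" "j \<le> i + r" "bd j" using exists_bd by blast
  define P where "P = (\<lambda>m::nat. 0 < m \<and> bd (i + int m))"
  have Pj: "P (nat (j - i))" using j unfolding P_def by simp
  define m where "m = (LEAST m. P m)"
  have Pm: "P m" unfolding m_def using Pj by (rule LeastI)
  have mle: "m \<le> nat (j - i)" unfolding m_def using Pj by (rule Least_le)
  have mmin: "\<not> P k" if "k < m" for k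
    using that unfolding m_def by (rule not_less_Least)
  have nx: "nxt i = i + int m" unfolding nxt_def m_def P_def ..
  have m0: "0 < m" and bm: "bd (i + int m)" using Pm unfolding P_def by auto
  show ?thesis
  proof (intro conjI allI impI)
    show "i < nxt i" using m0 nx by linarith
    show "nxt i \<le> i + r" using mle nx j by linarith
    show "bd (nxt i)" using bm nx by simp
    fix k assume k: "i < k \<and> k < nxt i"
    then have "nat (k - i) < m" using nx by linarith
    then have "\<not> P (nat (k - i))" by (rule mmin)
    moreover have "i + int (nat (k - i)) = k" using k by linarith
    ultimately show "\<not> bd k" using k unfolding P_def by auto
  qed
qed

lemma nxt_gt: "i < nxt i" using nxt_props by blast
lemma nxt_le: "nxt i \<le> i + r" using nxt_props by blast
lemma nxt_bd: "bd (nxt i)" using nxt_props by blast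
lemma nxt_min: "i < j \<Longrightarrow> j < nxt i \<Longrightarrow> \<not> bd j" using nxt_props by blast

lemma nxt_const: "i \<le> j \<Longrightarrow> j < nxt i \<Longrightarrow> w j = w i"
proof -
  assume a: "i \<le> j" "j < nxt i"
  show "w j = w i"
  proof (rule const_nochg[of i "nxt i - 1"])
    fix k assume "i < k" "k \<le> nxt i - 1"
    then have "\<not> bd k" using nxt_min[of i k] by simp
    then show "w (k - 1) = w k" unfolding bd_def by simp
  qed (use a in simp_all)
qed

lemma nxt_eq:
  assumes "i < j" "bd j" "\<And>k. i < k \<Longrightarrow> k < j \<Longrightarrow> \<not> bd k"
  shows "nxt i = j"
proof -
  have "\<not> nxt i < j" using assms(3)[of "nxt i"] nxt_gt nxt_bd by auto
  moreover have "\<not> j < nxt i" using nxt_min[of i j] assms by auto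
  ultimately show ?thesis by simp
qed

lemma nxt_per: "nxt (i + k*n) = nxt i + k*n"
proof (rule nxt_eq)
  show "i + k*n < nxt i + k*n" using nxt_gt by simp
  show "bd (nxt i + k*n)" using nxt_bd bd_per by simp
  fix j assume "i + k * n < j" "j < nxt i + k * n"
  then have "\<not> bd (j + (-k)*n)" using nxt_min[of i "j + (-k)*n"] by (simp add: algebra_simps)
  then show "\<not> bd j" using bd_per[of j "-k"] by simp
qed

lemma last_bd: "\<exists>c. c \<le> t \<and> bd c \<and> t < nxt c"
proof -
  define M where "M = {c \<in> {t-r..t}. bd c}"
  obtain j where j: "t - r < j" "j \<le> t" "bd j" using exists_bd[of "t-r"] by auto
  have fin: "finite M" unfolding M_def by (rule finite_subset[of _ "{t-r..t}"]) auto
  have ne: "M \<noteq> {}" using j unfolding M_def by auto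
  define c where "c = Max M"
  have cM: "c \<in> M" unfolding c_def using fin ne by (rule Max_in)
  have "t < nxt c"
  proof (rule ccontr)
    assume "\<not> t < nxt c"
    then have "nxt c \<in> M" using cM nxt_gt[of c] nxt_bd[of c] unfolding M_def by auto
    then have "nxt c \<le> c" unfolding c_def using fin by simp
    then show False using nxt_gt[of c] by simp
  qed
  then show ?thesis using cM unfolding M_def by auto
qed

lemma partition_sum:
  fixes F :: "int \<Rightarrow> int"
  assumes "bd c0"
  shows "bd t \<Longrightarrow> c0 \<le> t \<Longrightarrow> sum F {c0..<t} = (\<Sum>c\<in>{c\<in>{c0..<t}. bd c}. sum F {c..<nxt c})"
proof (induction "nat (t - c0)" arbitrary: t rule: less_induct)
  case less
  show ?case
  proof (cases "t = c0")
    case True then show ?thesis by simp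
  next
    case False
    define M where "M = {c\<in>{c0..<t}. bd c}"
    have fin: "finite M" unfolding M_def by (rule finite_subset[of _ "{c0..<t}"]) auto
    have ne: "c0 \<in> M" using assms False less.prems unfolding M_def by auto
    define p where "p = Max M"
    have pM: "p \<in> M" unfolding p_def using fin ne Max_in by blast
    have pmax: "\<And>c. c \<in> M \<Longrightarrow> c \<le> p" unfolding p_def using fin by simp
    have "nxt p = t"
    proof (rule nxt_eq)
      show "p < t" using pM unfolding M_def by auto
      show "bd t" by fact
      fix k assume "p < k" "k < t"
      then show "\<not> bd k" using pmax[of k] pM unfolding M_def by auto
    qed
    have Msplit: "M = insert p {c\<in>{c0..<p}. bd c}"
    proof
      show "M \<subseteq> insert p {c\<in>{c0..<p}. bd c}"
      proof
        fix c assume "c \<in> M"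
        then show "c \<in> insert p {c\<in>{c0..<p}. bd c}"
          using pmax[of c] unfolding M_def by (cases "c = p") auto
      qed
      show "insert p {c\<in>{c0..<p}. bd c} \<subseteq> M"
        using pM unfolding M_def by auto
    qed
    have IH: "sum F {c0..<p} = (\<Sum>c\<in>{c\<in>{c0..<p}. bd c}. sum F {c..<nxt c})"
      using less.hyps[of p] pM unfolding M_def by auto
    have "sum F {c0..<t} = sum F {c0..<p} + sum F {p..<t}"
      using pM unfolding M_def by (intro sum_split_int) auto
    also have "\<dots> = (\<Sum>c\<in>M. sum F {c..<nxt c})"
    proof -
      have fin2: "finite {c\<in>{c0..<p}. bd c}" by (rule finite_subset[of _ "{c0..<p}"]) auto
      have "p \<notin> {c\<in>{c0..<p}. bd c}" by simp
      then have "(\<Sum>c\<in>M. sum F {c..<nxt c}) = sum F {p..<nxt p} + (\<Sum>c\<in>{c\<in>{c0..<p}. bd c}. sum F {c..<nxt c})"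
        unfolding Msplit by (rule sum.insert[OF fin2])
      then show ?thesis using IH \<open>nxt p = t\<close> by simp
    qed
    finally show ?thesis unfolding M_def .
  qed
qed

end

lemma icc_ico: "{a..b} = {a..<b+(1::int)}" by auto

lemma sum_lower:
  fixes g :: int
  assumes "\<And>m. a \<le> m \<Longrightarrow> m < b \<Longrightarrow> g * v m \<ge> -1" "a \<le> b"
  shows "(\<Sum>m\<in>{a..<b}. g * v m) \<ge> -(b - a)"
proof -
  have "(\<Sum>m\<in>{a..<b}. g * v m) \<ge> (\<Sum>m\<in>{a..<b}. -1)"
    using assms by (intro sum_mono) auto
  then show ?thesis using assms by simp
qed

locale half =
  fixes n r :: int and u v :: "int \<Rightarrow> int"
  assumes r_pos': "r \<ge> 1"
    and u_pm': "\<And>i. u i = 1 \<or> u i = -1"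
    and v_pm': "\<And>i. v i = 1 \<or> v i = -1"
    and u_maj: "\<And>i. u i = (if (\<Sum>k\<in>{i-r..i+r}. v k) > 0 then 1 else -1)"
begin

definition S :: "int \<Rightarrow> int" where "S i = (\<Sum>k\<in>{i-r..i+r}. v k)"

lemma S_psum: "S i = psum v (i+r+1) - psum v (i-r)"
  unfolding S_def icc_ico using psum_diff[of "i-r" "i+r+1" v] r_pos' by simp

lemma S_step: "S (i+1) = S i + v (i+r+1) - v (i-r)"
proof -
  have "S (i+1) = psum v (i+r+1+1) - psum v (i-r+1)" unfolding S_psum by (simp add: algebra_simps)
  then show ?thesis unfolding S_psum psum_step by simp
qed

lemma S_odd: "odd (S i)"
proof -
  have ev: "even (\<Sum>k\<in>{i-r..i+r}. v k + 1)"
  proof (rule dvd_sum)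
    fix k show "2 dvd v k + 1" using v_pm'[of k] by auto
  qed
  have "(\<Sum>k\<in>{i-r..i+r}. v k + 1) = S i + (2*r+1)"
    unfolding S_def sum.distrib using r_pos' by simp
  then show ?thesis using ev by simp
qed

lemma S_pos: "u i = 1 \<Longrightarrow> S i \<ge> 1"
  using u_maj[of i] unfolding S_def[symmetric] by (auto split: if_splits)

lemma S_neg: "u i = -1 \<Longrightarrow> S i \<le> -1"
proof -
  assume "u i = -1"
  then have "S i \<le> 0" using u_maj[of i] unfolding S_def[symmetric] by (auto split: if_splits)
  moreover have "S i \<noteq> 0" using S_odd[of i] by auto
  ultimately show ?thesis by simp
qed

lemma bnd:
  assumes "u (a-1) \<noteq> u a"
  shows "S a = u a \<and> S (a-1) = u (a-1) \<and> v (a+r) = u a \<and> v (a-1-r) = u (a-1)"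
proof -
  have st: "S a = S (a-1) + v (a+r) - v (a-1-r)"
    using S_step[of "a-1"] by (simp add: algebra_simps)
  show ?thesis
  proof (cases "u a = 1")
    case True
    then have "u (a-1) = -1" using assms u_pm'[of "a-1"] by auto
    then show ?thesis using True st S_pos[of a] S_neg[of "a-1"] v_pm'[of "a+r"] v_pm'[of "a-1-r"] by auto
  next
    case False
    then have ua: "u a = -1" using u_pm'[of a] by auto
    then have "u (a-1) = 1" using assms u_pm'[of "a-1"] by auto
    then show ?thesis using ua st S_neg[of a] S_pos[of "a-1"] v_pm'[of "a+r"] v_pm'[of "a-1-r"] by auto
  qed
qed

lemma run_transfer:
  assumes "\<And>k. 0 \<le> k \<Longrightarrow> k \<le> r \<Longrightarrow> v (i+k) = v i"
  shows "\<And>k. 0 \<le> k \<Longrightarrow> k \<le> r \<Longrightarrow> u (i+k) = v i"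
proof -
  fix k assume k: "0 \<le> k" "k \<le> r"
  define j where "j = i + k"
  define g where "g = v i"
  have gg: "g * g = 1" using v_pm'[of i] unfolding g_def by auto
  have low: "\<And>m. g * v m \<ge> -1" proof -
    fix m show "g * v m \<ge> -1" using v_pm'[of m] v_pm'[of i] unfolding g_def by auto
  qed
  have "g * S j = (\<Sum>m\<in>{j-r..<j+r+1}. g * v m)"
    unfolding S_def icc_ico sum_distrib_left by simp
  also have "\<dots> = (\<Sum>m\<in>{j-r..<i}. g * v m) + (\<Sum>m\<in>{i..<i+r+1}. g * v m) + (\<Sum>m\<in>{i+r+1..<j+r+1}. g * v m)"
    using k unfolding j_def
    by (simp add: sum_split_int[of "i+k-r" i "i+k+r+1"] sum_split_int[of i "i+r+1" "i+k+r+1"])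
  also have "(\<Sum>m\<in>{i..<i+r+1}. g * v m) = (r+1)"
  proof -
    have "(\<Sum>m\<in>{i..<i+r+1}. g * v m) = (\<Sum>m\<in>{i..<i+r+1}. 1)"
    proof (rule sum.cong)
      fix m assume "m \<in> {i..<i+r+1}"
      then have "v m = g" using assms[of "m - i"] unfolding g_def by auto
      then show "g * v m = 1" using gg by simp
    qed simp
    then show ?thesis using r_pos' by simp
  qed
  finally have eq: "g * S j = (\<Sum>m\<in>{j-r..<i}. g * v m) + (r+1) + (\<Sum>m\<in>{i+r+1..<j+r+1}. g * v m)" .
  have l1: "(\<Sum>m\<in>{j-r..<i}. g * v m) \<ge> -(i - (j-r))"
    using k unfolding j_def by (intro sum_lower low) auto
  have l2: "(\<Sum>m\<in>{i+r+1..<j+r+1}. g * v m) \<ge> -((j+r+1) - (i+r+1))"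
    using k unfolding j_def by (intro sum_lower low) auto
  have pos: "g * S j \<ge> 1" using eq l1 l2 unfolding j_def by simp
  show "u (i+k) = v i"
  proof (cases "g = 1")
    case True
    then have "S j > 0" using pos by simp
    then show ?thesis using u_maj[of j] True unfolding S_def[symmetric] j_def g_def by simp
  next
    case False
    then have "g = -1" using v_pm'[of i] unfolding g_def by auto
    then have "S j < 0" using pos by simp
    then show ?thesis using u_maj[of j] \<open>g = -1\<close> unfolding S_def[symmetric] j_def g_def by simp
  qed
qed

end

locale mpair = U: pmf n r u + V: pmf n r v + h1: half n r u v + h2: half n r v u
  for n r :: int and u v :: "int \<Rightarrow> int"
begin

lemma ub: "U.bd a \<Longrightarrow> v (a+r) = u a \<and> v (a-1-r) = u (a-1)"
  using h1.bnd[of a] unfolding U.bd_def by auto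

lemma vb: "V.bd c \<Longrightarrow> u (c+r) = v c \<and> u (c-1-r) = v (c-1) \<and> h2.S c = v c \<and> h2.S (c-1) = v (c-1)"
  using h2.bnd[of c] unfolding V.bd_def by auto

lemma v_flip: "V.bd c \<Longrightarrow> v (c-1) = - v c"
  using V.w_pm[of c] V.w_pm[of "c-1"] unfolding V.bd_def by auto

lemma u_flip: "U.bd c \<Longrightarrow> u (c-1) = - u c"
  using U.w_pm[of c] U.w_pm[of "c-1"] unfolding U.bd_def by auto

lemma nv_last: "V.bd c \<Longrightarrow> v (V.nxt c - 1) = v c"
  using V.nxt_const[of c "V.nxt c - 1"] V.nxt_gt[of c] by simp

lemma nv_next: "V.bd c \<Longrightarrow> v (V.nxt c) = - v c"
  using nv_last[of c] v_flip[of "V.nxt c"] V.nxt_bd[of c] by simp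

lemma vc_ne: "v c \<noteq> - v c"
  using V.w_pm[of c] by auto

lemma e_ex: "V.bd c \<Longrightarrow> \<exists>a. c+r+1 \<le> a \<and> a \<le> V.nxt c + r \<and> U.bd a"
proof -
  assume c: "V.bd c"
  have "u (c+r) = v c" using vb[OF c] by simp
  moreover have "u (V.nxt c + r) = - v c" using vb[OF V.nxt_bd[of c]] nv_next[OF c] by simp
  ultimately have "u (c+r) \<noteq> u (V.nxt c + r)" using vc_ne by simp
  from chg[of "c+r" "V.nxt c + r" u] this V.nxt_gt[of c] obtain j where "c + r < j" "j \<le> V.nxt c + r" "u (j-1) \<noteq> u j" by auto
  then show ?thesis unfolding U.bd_def by (intro exI[of _ j]) auto
qed

lemma e_uniq_aux:
  assumes c: "V.bd c" and a: "c+r+1 \<le> a1" "a1 < a2" "a2 \<le> V.nxt c + r" "U.bd a1" "U.bd a2"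
  shows False
proof -
  define a3 where "a3 = U.nxt a1"
  have a3le: "a3 \<le> a2" using U.nxt_min[of a1 a2] a unfolding a3_def by force
  have a3gt: "a1 < a3" using U.nxt_gt unfolding a3_def by simp
  have b3: "U.bd a3" unfolding a3_def by (rule U.nxt_bd)
  have "u (a3 - 1) = u a1" using U.nxt_const[of a1 "a3-1"] a3gt unfolding a3_def by simp
  then have "v (a1-1-r) \<noteq> v (a3-1-r)" using ub[OF a(4)] ub[OF b3] a(4) unfolding U.bd_def by simp
  from chg[of "a1-1-r" "a3-1-r" v] this a3gt obtain j where j: "a1-1-r < j" "j \<le> a3-1-r" "v (j-1) \<noteq> v j" by auto
  have "c < j" "j < V.nxt c" using j a a3le by auto
  then show False using V.nxt_min[of c j] j unfolding V.bd_def by simp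
qed

lemma e_uniq:
  assumes "V.bd c" "c+r+1 \<le> a1" "a1 \<le> V.nxt c + r" "U.bd a1" "c+r+1 \<le> a2" "a2 \<le> V.nxt c + r" "U.bd a2"
  shows "a1 = a2"
proof (rule linorder_cases[of a1 a2])
  assume "a1 < a2" then show ?thesis using e_uniq_aux[of c a1 a2] assms by simp
next
  assume "a2 < a1" then show ?thesis using e_uniq_aux[of c a2 a1] assms by simp
qed

lemma f_ex: "V.bd c \<Longrightarrow> \<exists>a. c-r \<le> a \<and> a \<le> V.nxt c - 1 - r \<and> U.bd a"
proof -
  assume c: "V.bd c"
  have "u (c-1-r) = - v c" using vb[OF c] v_flip[OF c] by simp
  moreover have "u (V.nxt c - 1 - r) = v c" using vb[OF V.nxt_bd[of c]] nv_last[OF c] by simp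
  ultimately have "u (c-1-r) \<noteq> u (V.nxt c - 1 - r)" using vc_ne by simp
  from chg[of "c-1-r" "V.nxt c - 1 - r" u] this V.nxt_gt[of c] obtain j where "c-1-r < j" "j \<le> V.nxt c - 1 - r" "u (j-1) \<noteq> u j" by auto
  then show ?thesis unfolding U.bd_def by (intro exI[of _ j]) auto
qed

lemma f_uniq_aux:
  assumes c: "V.bd c" and a: "c-r \<le> a1" "a1 < a2" "a2 \<le> V.nxt c - 1 - r" "U.bd a1" "U.bd a2"
  shows False
proof -
  define a3 where "a3 = U.nxt a1"
  have a3le: "a3 \<le> a2" using U.nxt_min[of a1 a2] a unfolding a3_def by force
  have a3gt: "a1 < a3" using U.nxt_gt unfolding a3_def by simp
  have b3: "U.bd a3" unfolding a3_def by (rule U.nxt_bd)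
  have "u (a3 - 1) = u a1" using U.nxt_const[of a1 "a3-1"] a3gt unfolding a3_def by simp
  then have "v (a1+r) \<noteq> v (a3+r)" using ub[OF a(4)] ub[OF b3] b3 unfolding U.bd_def by simp
  from chg[of "a1+r" "a3+r" v] this a3gt obtain j where j: "a1+r < j" "j \<le> a3+r" "v (j-1) \<noteq> v j" by auto
  have "c < j" "j < V.nxt c" using j a a3le by auto
  then show False using V.nxt_min[of c j] j unfolding V.bd_def by simp
qed

lemma f_uniq:
  assumes "V.bd c" "c-r \<le> a1" "a1 \<le> V.nxt c - 1 - r" "U.bd a1" "c-r \<le> a2" "a2 \<le> V.nxt c - 1 - r" "U.bd a2"
  shows "a1 = a2"
proof (rule linorder_cases[of a1 a2])
  assume "a1 < a2" then show ?thesis using f_uniq_aux[of c a1 a2] assms by simp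
next
  assume "a2 < a1" then show ?thesis using f_uniq_aux[of c a2 a1] assms by simp
qed

definition ee :: "int \<Rightarrow> int" where
  "ee c = (THE a. c+r+1 \<le> a \<and> a \<le> V.nxt c + r \<and> U.bd a)"
definition ff :: "int \<Rightarrow> int" where
  "ff c = (THE a. c-r \<le> a \<and> a \<le> V.nxt c - 1 - r \<and> U.bd a)"

lemma ee: "V.bd c \<Longrightarrow> c+r+1 \<le> ee c \<and> ee c \<le> V.nxt c + r \<and> U.bd (ee c)"
proof -
  assume c: "V.bd c"
  obtain a where a: "c+r+1 \<le> a \<and> a \<le> V.nxt c + r \<and> U.bd a" using e_ex[OF c] by blast
  have "ee c = a" unfolding ee_def
    by (rule the_equality) (use a e_uniq[OF c] in auto)
  then show ?thesis using a by simp
qed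

lemma ee_eq: "V.bd c \<Longrightarrow> c+r+1 \<le> a \<Longrightarrow> a \<le> V.nxt c + r \<Longrightarrow> U.bd a \<Longrightarrow> ee c = a"
  using ee[of c] e_uniq[of c "ee c" a] by auto

lemma ff: "V.bd c \<Longrightarrow> c-r \<le> ff c \<and> ff c \<le> V.nxt c - 1 - r \<and> U.bd (ff c)"
proof -
  assume c: "V.bd c"
  obtain a where a: "c-r \<le> a \<and> a \<le> V.nxt c - 1 - r \<and> U.bd a" using f_ex[OF c] by blast
  have "ff c = a" unfolding ff_def
    by (rule the_equality) (use a f_uniq[OF c] in auto)
  then show ?thesis using a by simp
qed

lemma ff_eq: "V.bd c \<Longrightarrow> c-r \<le> a \<Longrightarrow> a \<le> V.nxt c - 1 - r \<Longrightarrow> U.bd a \<Longrightarrow> ff c = a"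
  using ff[of c] f_uniq[of c "ff c" a] by auto

end

context mpair begin

lemma tent:
  assumes c: "V.bd c"
  shows "psum u (ee c) - psum u (ff c) = v c * (V.nxt c - c)"
proof -
  define g where "g = v c"
  define c' where "c' = V.nxt c"
  define e where "e = ee c"
  define f where "f = ff c"
  have g: "g = 1 \<or> g = -1" unfolding g_def using V.w_pm by simp
  have cc: "c < c'" "c' \<le> c + r" unfolding c'_def using V.nxt_gt V.nxt_le by auto
  have er: "c+r+1 \<le> e" "e \<le> c' + r" "U.bd e" using ee[OF c] unfolding e_def c'_def by auto
  have fr: "c-r \<le> f" "f \<le> c' - 1 - r" "U.bd f" using ff[OF c] unfolding f_def c'_def by auto
  have vbc: "u (c+r) = g" "u (c-1-r) = - g" "h2.S c = g"
    using vb[OF c] v_flip[OF c] unfolding g_def by auto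
  have vbc': "u (c'-1-r) = g" "h2.S (c'-1) = g"
    using vb[OF V.nxt_bd[of c]] nv_last[OF c] unfolding g_def c'_def by auto
  have noe: "\<not> U.bd j" if "c+r+1 \<le> j" "j \<le> c'+r" "j \<noteq> e" for j
    using ee_eq[OF c, of j] that unfolding e_def c'_def by auto
  have nof: "\<not> U.bd j" if "c-r \<le> j" "j \<le> c'-1-r" "j \<noteq> f" for j
    using ff_eq[OF c, of j] that unfolding f_def c'_def by auto
  have i1: "u k = g" if "c+r \<le> k" "k \<le> e-1" for k
  proof -
    have "u k = u (c+r)"
      by (rule const_nochg[of "c+r" "e-1"]) (use that noe er in \<open>auto simp: U.bd_def\<close>)
    then show ?thesis using vbc by simp
  qed
  have ue: "u e = - g" using u_flip[OF er(3)] i1[of "e-1"] er g by auto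
  have i2: "u k = - g" if "e \<le> k" "k \<le> c'+r" for k
  proof -
    have "u k = u e"
      by (rule const_nochg[of e "c'+r"]) (use that noe er in \<open>auto simp: U.bd_def\<close>)
    then show ?thesis using ue by simp
  qed
  have i3: "u k = - g" if "c-1-r \<le> k" "k \<le> f-1" for k
  proof -
    have "u k = u (c-1-r)"
      by (rule const_nochg[of "c-1-r" "f-1"]) (use that nof fr in \<open>auto simp: U.bd_def\<close>)
    then show ?thesis using vbc by simp
  qed
  have uf: "u f = g" using u_flip[OF fr(3)] i3[of "f-1"] fr g by auto
  have i4: "u k = g" if "f \<le> k" "k \<le> c'-1-r" for k
  proof -
    have "u k = u f"
      by (rule const_nochg[of f "c'-1-r"]) (use that nof fr in \<open>auto simp: U.bd_def\<close>)
    then show ?thesis using uf by simp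
  qed
  have P1: "psum u e - psum u (c+r) = g * (e - (c+r))"
    using psum_diff[of "c+r" e u] sum_const_int[of "c+r" e u g] i1 er by auto
  have P2: "psum u (c'+r) - psum u e = (-g) * ((c'+r) - e)"
    using psum_diff[of e "c'+r" u] sum_const_int[of e "c'+r" u "-g"] i2 er by auto
  have P3: "psum u f - psum u (c-r) = (-g) * (f - (c-r))"
    using psum_diff[of "c-r" f u] sum_const_int[of "c-r" f u "-g"] i3 fr by auto
  have P4: "psum u (c'-1-r) - psum u f = g * ((c'-1-r) - f)"
    using psum_diff[of f "c'-1-r" u] sum_const_int[of f "c'-1-r" u g] i4 fr by auto
  have P0: "psum u (c+r+1) = psum u (c+r) + g" using psum_step[of u "c+r"] vbc by simp
  have Sc: "psum u (c+r+1) - psum u (c-r) = g" using vbc(3) h2.S_psum[of c] by simp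
  have Sc': "psum u (c'+r) - psum u (c'-1-r) = g" using vbc'(2) h2.S_psum[of "c'-1"] by simp
  have "psum u e - psum u f = g * (c' - c)"
    using g P0 P1 P2 P3 P4 Sc Sc' by (auto simp: algebra_simps)
  then show ?thesis unfolding e_def f_def g_def c'_def .
qed

end

lemma mult_small:
  fixes k n :: int
  assumes "n \<ge> 1" "k*n < n" "-n < k*n"
  shows "k = 0"
proof (rule ccontr)
  assume "k \<noteq> 0"
  then consider "k \<ge> 1" | "k \<le> -1" by linarith
  then show False
  proof cases
    case 1 then have "1*n \<le> k*n" using assms by (intro mult_right_mono) auto
    then show False using assms by linarith
  next
    case 2 then have "k*n \<le> (-1)*n" using assms by (intro mult_right_mono) auto
    then show False using assms by linarith
  qed
qed

lemma dm: "(x::int) = x mod m + (x div m) * m"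
  using div_mult_mod_eq[of x m] by linarith

context mpair begin

lemma ee_per:
  assumes c: "V.bd c" shows "ee (c + k*n) = ee c + k*n"
proof -
  have e: "c+r+1 \<le> ee c" "ee c \<le> V.nxt c + r" "U.bd (ee c)" using ee[OF c] by auto
  show ?thesis
  proof (rule ee_eq)
    show "V.bd (c + k*n)" using V.bd_per[of c k] c by simp
    show "c + k*n + r + 1 \<le> ee c + k*n" using e by simp
    show "ee c + k*n \<le> V.nxt (c + k*n) + r" using e V.nxt_per[of c k] by simp
    show "U.bd (ee c + k*n)" using U.bd_per[of "ee c" k] e by simp
  qed
qed

lemma ff_per:
  assumes c: "V.bd c" shows "ff (c + k*n) = ff c + k*n"
proof -
  have e: "c-r \<le> ff c" "ff c \<le> V.nxt c - 1 - r" "U.bd (ff c)" using ff[OF c] by auto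
  show ?thesis
  proof (rule ff_eq)
    show "V.bd (c + k*n)" using V.bd_per[of c k] c by simp
    show "c + k*n - r \<le> ff c + k*n" using e by simp
    show "ff c + k*n \<le> V.nxt (c + k*n) - 1 - r" using e V.nxt_per[of c k] by simp
    show "U.bd (ff c + k*n)" using U.bd_per[of "ff c" k] e by simp
  qed
qed

lemma nv_le: "V.bd c1 \<Longrightarrow> V.bd c2 \<Longrightarrow> c1 < c2 \<Longrightarrow> V.nxt c1 \<le> c2"
  using V.nxt_min[of c1 c2] by force

lemma ee_mono: "V.bd c1 \<Longrightarrow> V.bd c2 \<Longrightarrow> c1 < c2 \<Longrightarrow> ee c1 < ee c2"
  using ee[of c1] ee[of c2] nv_le[of c1 c2] by auto

lemma ff_mono: "V.bd c1 \<Longrightarrow> V.bd c2 \<Longrightarrow> c1 < c2 \<Longrightarrow> ff c1 < ff c2"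
  using ff[of c1] ff[of c2] nv_le[of c1 c2] by auto

lemma ee_surj: "U.bd a \<Longrightarrow> \<exists>c. V.bd c \<and> ee c = a"
proof -
  assume a: "U.bd a"
  obtain c where c: "c \<le> a-r-1" "V.bd c" "a-r-1 < V.nxt c" using V.last_bd[of "a-r-1"] by blast
  then show ?thesis using ee_eq[of c a] a by (intro exI[of _ c]) auto
qed

lemma ff_surj: "U.bd a \<Longrightarrow> \<exists>c. V.bd c \<and> ff c = a"
proof -
  assume a: "U.bd a"
  obtain c where c: "c \<le> a+r" "V.bd c" "a+r < V.nxt c" using V.last_bd[of "a+r"] by blast
  then show ?thesis using ff_eq[of c a] a by (intro exI[of _ c]) auto
qed

lemma bij_mod:
  fixes g :: "int \<Rightarrow> int"
  assumes per: "\<And>c k. V.bd c \<Longrightarrow> g (c + k*n) = g c + k*n"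
    and mono: "\<And>c1 c2. V.bd c1 \<Longrightarrow> V.bd c2 \<Longrightarrow> c1 < c2 \<Longrightarrow> g c1 < g c2"
    and gb: "\<And>c. V.bd c \<Longrightarrow> U.bd (g c)"
    and surj: "\<And>a. U.bd a \<Longrightarrow> \<exists>c. V.bd c \<and> g c = a"
  shows "bij_betw (\<lambda>c. g c mod n) {c\<in>{c0..<c0+n}. V.bd c} {a\<in>{0..<n}. U.bd a}"
proof -
  have n1: "n \<ge> 1" by (rule U.n_pos)
  have inj: "inj_on (\<lambda>c. g c mod n) {c\<in>{c0..<c0+n}. V.bd c}"
  proof (rule inj_onI)
    fix c1 c2 assume c1: "c1 \<in> {c\<in>{c0..<c0+n}. V.bd c}" and c2: "c2 \<in> {c\<in>{c0..<c0+n}. V.bd c}"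
      and eq: "g c1 mod n = g c2 mod n"
    define k where "k = g c2 div n - g c1 div n"
    have kn: "k*n = g c2 div n * n - g c1 div n * n" unfolding k_def by (simp add: left_diff_distrib)
    have "g c2 = g c1 + k*n"
      using eq dm[of "g c1" n] dm[of "g c2" n] kn by linarith
    then have ge: "g (c1 + k*n) = g c2" using per[of c1 k] c1 by simp
    have b1: "V.bd (c1 + k*n)" using V.bd_per[of c1 k] c1 by simp
    have "c1 + k*n = c2"
    proof (rule linorder_cases[of "c1 + k*n" c2])
      assume "c1 + k*n < c2" then show ?thesis using mono[OF b1, of c2] c2 ge by simp
    next
      assume "c2 < c1 + k*n" then show ?thesis using mono[OF _ b1, of c2] c2 ge by simp
    qed simp
    moreover have "c0 \<le> c1" "c1 < c0 + n" "c0 \<le> c2" "c2 < c0 + n" using c1 c2 by auto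
    ultimately have "k*n < n" "-n < k*n" by linarith+
    then have "k = 0" using mult_small[OF n1] by blast
    then show "c1 = c2" using \<open>c1 + k*n = c2\<close> by simp
  qed
  have img: "(\<lambda>c. g c mod n) ` {c\<in>{c0..<c0+n}. V.bd c} = {a\<in>{0..<n}. U.bd a}"
  proof
    show "(\<lambda>c. g c mod n) ` {c\<in>{c0..<c0+n}. V.bd c} \<subseteq> {a\<in>{0..<n}. U.bd a}"
    proof
      fix a assume "a \<in> (\<lambda>c. g c mod n) ` {c\<in>{c0..<c0+n}. V.bd c}"
      then obtain c where c: "V.bd c" "a = g c mod n" by auto
      have "g c mod n = g c + (- (g c div n)) * n"
        using dm[of "g c" n] by linarith
      then have "U.bd a" using U.bd_per[of "g c" "- (g c div n)"] gb[OF c(1)] c(2) by simp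
      moreover have "a \<in> {0..<n}" using c n1 by simp
      ultimately show "a \<in> {a\<in>{0..<n}. U.bd a}" by simp
    qed
    show "{a\<in>{0..<n}. U.bd a} \<subseteq> (\<lambda>c. g c mod n) ` {c\<in>{c0..<c0+n}. V.bd c}"
    proof
      fix a assume a: "a \<in> {a\<in>{0..<n}. U.bd a}"
      obtain c where c: "V.bd c" "g c = a" using surj a by blast
      define k where "k = (c - c0) div n"
      define c1 where "c1 = c + (-k)*n"
      have "c1 - c0 = (c - c0) mod n"
        using dm[of "c - c0" n] unfolding c1_def k_def by linarith
      moreover have "0 \<le> (c - c0) mod n" "(c - c0) mod n < n" using n1 by simp_all
      ultimately have c1r: "c1 \<in> {c0..<c0+n}" by simp
      have c1b: "V.bd c1" unfolding c1_def using V.bd_per[of c "-k"] c by simp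
      have "g c1 = a + (-k)*n" unfolding c1_def using per[OF c(1), of "-k"] c(2) by simp
      then have "g c1 mod n = a mod n" by (simp only: mod_mult_self1)
      also have "\<dots> = a" using a by simp
      finally have "g c1 mod n = a" .
      then show "a \<in> (\<lambda>c. g c mod n) ` {c\<in>{c0..<c0+n}. V.bd c}"
        using c1r c1b by (intro image_eqI[of _ _ c1]) auto
    qed
  qed
  show ?thesis using inj img unfolding bij_betw_def by simp
qed

lemma sum_rep:
  fixes g :: "int \<Rightarrow> int"
  assumes bij: "bij_betw (\<lambda>c. g c mod n) G A0"
  shows "(\<Sum>c\<in>G. psum u (g c)) = (\<Sum>a\<in>A0. psum u a) + psum u n * (\<Sum>c\<in>G. g c div n)"
    and "(\<Sum>c\<in>G. g c) = (\<Sum>a\<in>A0. a) + n * (\<Sum>c\<in>G. g c div n)"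
proof -
  have n0: "n \<ge> 0" using U.n_pos by simp
  have "(\<Sum>c\<in>G. psum u (g c)) = (\<Sum>c\<in>G. psum u (g c mod n) + psum u n * (g c div n))"
  proof (rule sum.cong)
    fix c show "psum u (g c) = psum u (g c mod n) + psum u n * (g c div n)"
      using psum_mod[where w=u and n=n, OF U.w_per1 n0, of "g c"] by (simp only: mult.commute)
  qed simp
  also have "\<dots> = (\<Sum>c\<in>G. psum u (g c mod n)) + psum u n * (\<Sum>c\<in>G. g c div n)"
    by (simp only: sum.distrib sum_distrib_left)
  also have "(\<Sum>c\<in>G. psum u (g c mod n)) = (\<Sum>a\<in>A0. psum u a)"
    using sum.reindex_bij_betw[OF bij, of "psum u"] .
  finally show "(\<Sum>c\<in>G. psum u (g c)) = (\<Sum>a\<in>A0. psum u a) + psum u n * (\<Sum>c\<in>G. g c div n)" .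
  have "(\<Sum>c\<in>G. g c) = (\<Sum>c\<in>G. g c mod n + n * (g c div n))"
  proof (rule sum.cong)
    fix c show "g c = g c mod n + n * (g c div n)" using dm[of "g c" n] by (simp add: mult.commute)
  qed simp
  also have "\<dots> = (\<Sum>c\<in>G. g c mod n) + n * (\<Sum>c\<in>G. g c div n)"
    by (simp only: sum.distrib sum_distrib_left)
  also have "(\<Sum>c\<in>G. g c mod n) = (\<Sum>a\<in>A0. a)"
    using sum.reindex_bij_betw[OF bij, of "\<lambda>a. a"] .
  finally show "(\<Sum>c\<in>G. g c) = (\<Sum>a\<in>A0. a) + n * (\<Sum>c\<in>G. g c div n)" .
qed

lemma main: "\<exists>D\<ge>2. sum v {0..<n} = D * sum u {0..<n}"
proof -
  have n1: "n \<ge> 1" by (rule U.n_pos)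
  obtain c0 where c0: "V.bd c0" using V.exists_bd[of 0] by blast
  define G where "G = {c\<in>{c0..<c0+n}. V.bd c}"
  define A0 where "A0 = {a\<in>{0..<n}. U.bd a}"
  have finG: "finite G" unfolding G_def by (rule finite_subset[of _ "{c0..<c0+n}"]) auto
  have c0G: "c0 \<in> G" unfolding G_def using c0 n1 by simp
  have bdn: "V.bd (c0 + n)" using V.bd_per[of c0 1] c0 by simp
  have part: "sum F {c0..<c0+n} = (\<Sum>c\<in>G. sum F {c..<V.nxt c})" for F :: "int \<Rightarrow> int"
    unfolding G_def using V.partition_sum[OF c0 bdn, of F] n1 by simp
  have "sum v {0..<n} = sum v {c0..<c0+n}"
    using per_sum[where w=v and n=n, OF V.w_per1, of c0] n1 by simp
  also have "\<dots> = (\<Sum>c\<in>G. sum v {c..<V.nxt c})" by (rule part)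
  also have "\<dots> = (\<Sum>c\<in>G. psum u (ee c) - psum u (ff c))"
  proof (rule sum.cong)
    fix c assume "c \<in> G"
    then have c: "V.bd c" unfolding G_def by simp
    have "sum v {c..<V.nxt c} = v c * (V.nxt c - c)"
    proof (rule sum_const_int)
      fix k assume "c \<le> k" "k < V.nxt c"
      then show "v k = v c" by (rule V.nxt_const)
    next
      show "c \<le> V.nxt c" using V.nxt_gt[of c] by simp
    qed
    then show "sum v {c..<V.nxt c} = psum u (ee c) - psum u (ff c)" using tent[OF c] by simp
  qed simp
  finally have Y: "sum v {0..<n} = (\<Sum>c\<in>G. psum u (ee c)) - (\<Sum>c\<in>G. psum u (ff c))"
    by (simp add: sum_subtractf)
  have "n = sum (\<lambda>_. 1) {c0..<c0+n}" using n1 by simp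
  also have "\<dots> = (\<Sum>c\<in>G. sum (\<lambda>_. 1) {c..<V.nxt c})" by (rule part)
  also have "\<dots> = (\<Sum>c\<in>G. V.nxt c - c)"
    using V.nxt_gt by (intro sum.cong) (auto simp: less_imp_le)
  also have "\<dots> < (\<Sum>c\<in>G. ee c - ff c)"
  proof (rule sum_strict_mono)
    show "finite G" by fact
    show "G \<noteq> {}" using c0G by auto
    fix c assume "c \<in> G"
    then have c: "V.bd c" unfolding G_def by simp
    have "ee c \<ge> c+r+1" "ff c \<le> V.nxt c - 1 - r" using ee[OF c] ff[OF c] by auto
    then show "V.nxt c - c < ee c - ff c" using V.nxt_le[of c] by linarith
  qed
  finally have strict: "n < (\<Sum>c\<in>G. ee c) - (\<Sum>c\<in>G. ff c)" by (simp add: sum_subtractf)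
  have eb: "\<And>c. V.bd c \<Longrightarrow> U.bd (ee c)" using ee by blast
  have fb: "\<And>c. V.bd c \<Longrightarrow> U.bd (ff c)" using ff by blast
  have be: "bij_betw (\<lambda>c. ee c mod n) G A0" unfolding G_def A0_def
    by (rule bij_mod[where g=ee, OF ee_per ee_mono eb ee_surj])
  have bf: "bij_betw (\<lambda>c. ff c mod n) G A0" unfolding G_def A0_def
    by (rule bij_mod[where g=ff, OF ff_per ff_mono fb ff_surj])
  define De where "De = (\<Sum>c\<in>G. ee c div n)"
  define Df where "Df = (\<Sum>c\<in>G. ff c div n)"
  have Y1: "sum v {0..<n} = psum u n * De - psum u n * Df"
    using Y sum_rep(1)[OF be] sum_rep(1)[OF bf] unfolding De_def Df_def by linarith
  have Y2: "sum v {0..<n} = (De - Df) * psum u n"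
    unfolding Y1 by (simp add: left_diff_distrib mult.commute)
  have N1: "n < n * De - n * Df"
    using strict sum_rep(2)[OF be] sum_rep(2)[OF bf] unfolding De_def Df_def by linarith
  have N2: "n < n * (De - Df)"
    using N1 by (simp add: right_diff_distrib)
  have D2: "De - Df \<ge> 2"
  proof (rule ccontr)
    assume "\<not> De - Df \<ge> 2"
    then have "De - Df \<le> 1" by simp
    then have "n * (De - Df) \<le> n * 1" using n1 by (intro mult_left_mono) auto
    then show False using N2 by simp
  qed
  have "psum u n = sum u {0..<n}" using n1 by (simp add: psum_def)
  then show ?thesis using Y2 D2 by (intro exI[of _ "De - Df"]) simp
qed

end

lemma L01:
  fixes f :: "'a \<Rightarrow> nat"
  assumes "finite D" "\<And>d. d \<in> D \<Longrightarrow> f d = 0 \<or> f d = 1"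
  shows "(\<Sum>d\<in>D. 2 * int (f d) - 1) = int (card {d\<in>D. f d = 1}) - int (card {d\<in>D. f d = 0})"
    and "card D = card {d\<in>D. f d = 1} + card {d\<in>D. f d = 0}"
proof -
  have U: "D = {d\<in>D. f d = 1} \<union> {d\<in>D. f d = 0}" using assms(2) by blast
  have dis: "{d\<in>D. f d = 1} \<inter> {d\<in>D. f d = 0} = {}" by auto
  have f1: "finite {d\<in>D. f d = 1}" "finite {d\<in>D. f d = 0}" using assms(1) by auto
  have "(\<Sum>d\<in>D. 2 * int (f d) - 1) = (\<Sum>d\<in>{d\<in>D. f d = 1}. 2 * int (f d) - 1) + (\<Sum>d\<in>{d\<in>D. f d = 0}. 2 * int (f d) - 1)"
    by (subst U) (rule sum.union_disjoint[OF f1 dis])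
  also have "(\<Sum>d\<in>{d\<in>D. f d = 1}. 2 * int (f d) - 1) = (\<Sum>d\<in>{d\<in>D. f d = 1}. 1)"
    by (rule sum.cong) auto
  also have "(\<Sum>d\<in>{d\<in>D. f d = 0}. 2 * int (f d) - 1) = (\<Sum>d\<in>{d\<in>D. f d = 0}. -1)"
    by (rule sum.cong) auto
  finally show "(\<Sum>d\<in>D. 2 * int (f d) - 1) = int (card {d\<in>D. f d = 1}) - int (card {d\<in>D. f d = 0})"
    by simp
  show "card D = card {d\<in>D. f d = 1} + card {d\<in>D. f d = 0}"
    by (subst U) (rule card_Un_disjoint[OF f1 dis])
qed

lemma wc_cong:
  assumes "\<And>d. \<tau> ((i + d) mod n) = \<tau> ((j + d) mod n)"
  shows "win_count n r \<tau> i b = win_count n r \<tau> j b"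
  unfolding win_count_def using assms by simp

lemma maj_mod: "maj n r \<tau> (i mod n) = maj n r \<tau> i"
proof -
  have "win_count n r \<tau> (i mod n) b = win_count n r \<tau> i b" for b
    by (rule wc_cong) (simp add: mod_add_left_eq)
  then show ?thesis unfolding maj_def by simp
qed

lemma maj_per: "maj n r \<tau> (i + k*n) = maj n r \<tau> i"
proof -
  have "win_count n r \<tau> (i + k*n) b = win_count n r \<tau> i b" for b
  proof (rule wc_cong)
    fix d have "i + k*n + d = (i + d) + k*n" by simp
    then show "\<tau> ((i + k * n + d) mod n) = \<tau> ((i + d) mod n)" by (simp only: mod_mult_self1)
  qed
  then show ?thesis unfolding maj_def by simp
qed

lemma maj01: "maj n r \<tau> i = 0 \<or> maj n r \<tau> i = 1"
  unfolding maj_def by simp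

lemma maj_sign:
  assumes "r \<ge> 1" "\<And>j. \<tau> (j mod n) = 0 \<or> \<tau> (j mod n) = 1"
  shows "2 * int (maj n r \<tau> i) - 1 = (if (\<Sum>k\<in>{i-r..i+r}. 2 * int (\<tau> (k mod n)) - 1) > 0 then 1 else -1)"
proof -
  have "(\<Sum>k\<in>{i-r..i+r}. 2 * int (\<tau> (k mod n)) - 1) = (\<Sum>d\<in>{-r..r}. 2 * int (\<tau> ((i+d) mod n)) - 1)"
  proof -
    have "{i-r..i+r} = (\<lambda>d. i + d) ` {-r..r}"
    proof
      show "{i-r..i+r} \<subseteq> (\<lambda>d. i + d) ` {-r..r}"
      proof
        fix k assume "k \<in> {i-r..i+r}"
        then show "k \<in> (\<lambda>d. i + d) ` {-r..r}" by (intro image_eqI[of _ _ "k - i"]) auto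
      qed
    qed auto
    moreover have "inj_on (\<lambda>d. i + d) {-r..r}" by (rule inj_onI) simp
    ultimately show ?thesis by (intro sum.reindex_cong[of "\<lambda>d. i + d"]) auto
  qed
  also have "\<dots> = int (win_count n r \<tau> i 1) - int (win_count n r \<tau> i 0)"
    unfolding win_count_def using assms(2) by (intro L01(1)) auto
  finally have S: "(\<Sum>k\<in>{i-r..i+r}. 2 * int (\<tau> (k mod n)) - 1) = int (win_count n r \<tau> i 1) - int (win_count n r \<tau> i 0)" .
  have "card {-r..r} = win_count n r \<tau> i 1 + win_count n r \<tau> i 0"
    unfolding win_count_def using assms(2) by (intro L01(2)) auto
  then have "win_count n r \<tau> i 1 + win_count n r \<tau> i 0 = nat (2*r+1)" by simp
  then have "int (win_count n r \<tau> i 1) + int (win_count n r \<tau> i 0) = 2*r+1" using assms(1) by simp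
  then have ne: "win_count n r \<tau> i 1 \<noteq> win_count n r \<tau> i 0" by presburger
  show ?thesis unfolding S maj_def using ne by auto
qed

theorem claim21:
  fixes n r :: int and \<sigma> :: "int \<Rightarrow> nat"
  assumes "r \<ge> 1" and "n \<ge> 1"
    and "\<forall>i\<in>{0..<n}. \<sigma> i \<in> {0, 1}"
    and "temporally_periodic n r \<sigma>"
    and "\<forall>i\<in>{0..<n}. \<exists>s L \<beta>. max_block n \<sigma> s L \<beta> \<and> in_block n s L i"
    and "\<forall>s L \<beta>. max_block n \<sigma> s L \<beta> \<longrightarrow> L \<le> r"
  shows "card {i\<in>{0..<n}. \<sigma> i = 0} = card {i\<in>{0..<n}. \<sigma> i = 1}"
proof -
  have r1: "r \<ge> 1" and n1: "n \<ge> 1" using assms by auto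
  have s01: "\<sigma> (j mod n) = 0 \<or> \<sigma> (j mod n) = 1" for j
    using assms(3) n1 by auto
  define x where "x = (\<lambda>i. 2 * int (\<sigma> (i mod n)) - 1)"
  define y where "y = (\<lambda>i. 2 * int (maj n r \<sigma> i) - 1)"
  have x_pm: "x i = 1 \<or> x i = -1" for i using s01[of i] unfolding x_def by auto
  have y_pm: "y i = 1 \<or> y i = -1" for i using maj01[of n r \<sigma> i] unfolding y_def by auto
  have x_per: "x (i + k*n) = x i" for i k unfolding x_def by simp
  have y_per: "y (i + k*n) = y i" for i k unfolding y_def using maj_per by simp
  have ymaj: "y i = (if (\<Sum>k\<in>{i-r..i+r}. x k) > 0 then 1 else -1)" for i
    unfolding y_def x_def using maj_sign[of r \<sigma> n i] r1 s01 by simp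
  have m01: "maj n r \<sigma> (j mod n) = 0 \<or> maj n r \<sigma> (j mod n) = 1" for j by (rule maj01)
  have xmaj: "x i = (if (\<Sum>k\<in>{i-r..i+r}. y k) > 0 then 1 else -1)" for i
  proof -
    have "i mod n \<in> {0..<n}" using n1 by simp
    then have "\<sigma> (i mod n) = maj n r (maj n r \<sigma>) (i mod n)"
      using assms(4) unfolding temporally_periodic_def by simp
    also have "\<dots> = maj n r (maj n r \<sigma>) i" by (rule maj_mod)
    finally have "x i = 2 * int (maj n r (maj n r \<sigma>) i) - 1" unfolding x_def by simp
    also have "\<dots> = (if (\<Sum>k\<in>{i-r..i+r}. 2 * int (maj n r \<sigma> (k mod n)) - 1) > 0 then 1 else -1)"
      by (rule maj_sign[where \<tau>="maj n r \<sigma>" and n=n, OF r1 m01])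
    also have "(\<Sum>k\<in>{i-r..i+r}. 2 * int (maj n r \<sigma> (k mod n)) - 1) = (\<Sum>k\<in>{i-r..i+r}. y k)"
      unfolding y_def by (simp add: maj_mod)
    finally show ?thesis .
  qed
  have x_run: "\<exists>k\<in>{1..r}. x (i+k) \<noteq> x i" for i
  proof -
    define i0 where "i0 = i mod n"
    have i0r: "i0 \<in> {0..<n}" unfolding i0_def using n1 by simp
    obtain s L \<beta> where mb: "max_block n \<sigma> s L \<beta>" and ib: "in_block n s L i0"
      using assms(5) i0r by blast
    have Lr: "L \<le> r" using assms(6) mb by blast
    obtain k0 where k0: "k0 \<in> {0..<L}" "(s + k0) mod n = i0" using ib unfolding in_block_def by blast
    have sb: "\<sigma> ((s + k0) mod n) = \<beta>" using mb k0 unfolding max_block_def by blast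
    have sL: "\<sigma> ((s + L) mod n) = 1 - \<beta>" using mb unfolding max_block_def by blast
    have xi: "x i = 2 * int \<beta> - 1" unfolding x_def using sb k0 unfolding i0_def by simp
    have "(i + (L - k0)) mod n = (i mod n + (L - k0)) mod n" by (simp add: mod_add_left_eq)
    also have "\<dots> = ((s + k0) mod n + (L - k0)) mod n" using k0 unfolding i0_def by simp
    also have "\<dots> = (s + L) mod n" by (simp add: mod_add_left_eq)
    finally have "x (i + (L - k0)) = 2 * int (1 - \<beta>) - 1" unfolding x_def using sL by simp
    moreover have "\<beta> = 0 \<or> \<beta> = 1" using s01[of i] sb k0 unfolding i0_def by simp
    ultimately have "x (i + (L - k0)) \<noteq> x i" using xi by auto
    moreover have "L - k0 \<in> {1..r}" using k0 Lr by auto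
    ultimately show ?thesis by blast
  qed
  have h1: "half r x y" unfolding half_def using r1 x_pm y_pm xmaj by blast
  have h2: "half r y x" unfolding half_def using r1 x_pm y_pm ymaj by blast
  have y_run: "\<exists>k\<in>{1..r}. y (i+k) \<noteq> y i" for i
  proof (rule ccontr)
    assume "\<not> (\<exists>k\<in>{1..r}. y (i+k) \<noteq> y i)"
    then have a: "\<And>k. 0 \<le> k \<Longrightarrow> k \<le> r \<Longrightarrow> y (i+k) = y i"
      by (metis add.right_neutral atLeastAtMost_iff int_one_le_iff_zero_less order_le_less)
    have b: "\<And>k. 0 \<le> k \<Longrightarrow> k \<le> r \<Longrightarrow> x (i+k) = y i"
      using half.run_transfer[OF h1, of i] a by blast
    obtain k where "k \<in> {1..r}" "x (i+k) \<noteq> x i" using x_run by blast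
    then show False using b[of k] b[of 0] by simp
  qed
  have px: "pmf n r x" unfolding pmf_def using n1 r1 x_per x_pm x_run by blast
  have py: "pmf n r y" unfolding pmf_def using n1 r1 y_per y_pm y_run by blast
  have m1: "mpair n r x y" unfolding mpair_def using px py h1 h2 by blast
  have m2: "mpair n r y x" unfolding mpair_def using px py h1 h2 by blast
  obtain D1 where D1: "D1 \<ge> 2" "sum y {0..<n} = D1 * sum x {0..<n}" using mpair.main[OF m1] by blast
  obtain D2 where D2: "D2 \<ge> 2" "sum x {0..<n} = D2 * sum y {0..<n}" using mpair.main[OF m2] by blast
  define X where "X = sum x {0..<n}"
  have "X = D2 * sum y {0..<n}" unfolding X_def by (rule D2(2))
  also have "\<dots> = D2 * (D1 * X)" unfolding X_def D1(2) ..
  finally have eq: "X = (D2 * D1) * X" by (simp only: mult.assoc)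
  have big: "D2 * D1 \<ge> 4" using D1 D2 mult_mono[of 2 D2 2 D1] by simp
  have "(D2 * D1 - 1) * X = 0" using eq by (simp add: algebra_simps)
  moreover have "D2 * D1 - 1 \<noteq> 0" using big by simp
  ultimately have X0: "X = 0" by simp
  have "X = (\<Sum>i\<in>{0..<n}. 2 * int (\<sigma> i) - 1)"
    unfolding X_def x_def by (rule sum.cong) auto
  also have "\<dots> = int (card {i\<in>{0..<n}. \<sigma> i = 1}) - int (card {i\<in>{0..<n}. \<sigma> i = 0})"
    using assms(3) by (intro L01(1)) auto
  finally show ?thesis using X0 by simp
qed


end
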